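(* Let $\alpha<\beta$ and let $S=S(\alpha,\beta;\infty)=\{z\in\mathbb{C}:z\ne0,\ \alpha<\arg z<\beta\}$. Let $f$ be holomorphic in $S$ and continuous on $\overline{S}$, and suppose there are $M,C,\lambda>0$ with $|f(z)|\le M$ for every $z\in S$ and $|f(z)|\le C/|z|^{\lambda}$ for every $z\neq 0$ with $\arg z=\alpha$. Then for every $z\in\overline{S}\setminus\{0\}$, $$|f(z)|\le K\Big(\frac{C}{|z|^{\lambda}}\Big)^{\frac{\beta-\theta}{\beta-\alpha}},$$ where $\theta=\arg z\in[\alpha,\beta]$ and $K=\max\{1,M\}$. *)

theory Defs
  imports "HOL-Complex_Analysis.Complex_Analysis"
begin

definition sector :: "real \<Rightarrow> real \<Rightarrow> complex set" where
  "sector \<alpha> \<beta> = {z. z \<noteq> 0 \<and> (\<exists>\<theta>. \<alpha> < \<theta> \<and> \<theta> < \<beta> \<and> z = of_real (cmod z) * cis \<theta>)}"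

end

theory Submission
  imports Defs
begin

lemma sector_mem:
  assumes "\<alpha> < \<theta>" "\<theta> < \<beta>" "r > 0"
  shows "of_real r * cis \<theta> \<in> sector \<alpha> \<beta>"
  unfolding sector_def using assms
  by (auto simp: norm_mult)

lemma closure_sector_mem:
  assumes "\<alpha> < \<beta>" "\<alpha> \<le> \<theta>" "\<theta> \<le> \<beta>" "r > 0"
  shows "of_real r * cis \<theta> \<in> closure (sector \<alpha> \<beta>)"
proof (rule Lim_in_closed_set[where F="at_right (0::real)" and f="\<lambda>s. of_real r * cis (\<theta> + s * ((\<alpha>+\<beta>)/2 - \<theta>))"])
  show "closed (closure (sector \<alpha> \<beta>))" by simp
  show "at_right (0::real) \<noteq> bot" by simp
  have "eventually (\<lambda>s. s \<in> {0<..<1::real}) (at_right 0)"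
    by (rule eventually_at_right_real) simp
  then show "eventually (\<lambda>s. of_real r * cis (\<theta> + s * ((\<alpha>+\<beta>)/2 - \<theta>)) \<in> closure (sector \<alpha> \<beta>)) (at_right 0)"
  proof (rule eventually_mono)
    fix s :: real assume s: "s \<in> {0<..<1}"
    have "\<alpha> < \<theta> + s * ((\<alpha>+\<beta>)/2 - \<theta>)" "\<theta> + s * ((\<alpha>+\<beta>)/2 - \<theta>) < \<beta>"
    proof -
      have e: "\<theta> + s * ((\<alpha>+\<beta>)/2 - \<theta>) = (1-s)*\<theta> + s*((\<alpha>+\<beta>)/2)" by (simp add: algebra_simps)
      have a1: "(1-s)*\<alpha> \<le> (1-s)*\<theta>" "(1-s)*\<theta> \<le> (1-s)*\<beta>" using s assms by (auto intro: mult_left_mono)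
      have a2: "s*\<alpha> < s*((\<alpha>+\<beta>)/2)" "s*((\<alpha>+\<beta>)/2) < s * \<beta>" using s assms by auto
      have a3: "(1-s)*\<alpha> + s*\<alpha> = \<alpha>" "(1-s)*\<beta> + s*\<beta> = \<beta>" by (simp_all add: algebra_simps)
      show "\<alpha> < \<theta> + s * ((\<alpha>+\<beta>)/2 - \<theta>)" unfolding e using a1 a2 a3 by linarith
      show "\<theta> + s * ((\<alpha>+\<beta>)/2 - \<theta>) < \<beta>" unfolding e using a1 a2 a3 by linarith
    qed
    then show "of_real r * cis (\<theta> + s * ((\<alpha>+\<beta>)/2 - \<theta>)) \<in> closure (sector \<alpha> \<beta>)"
      using sector_mem[OF _ _ \<open>r>0\<close>] closure_subset by blast
  qed
  show "((\<lambda>s. of_real r * cis (\<theta> + s * ((\<alpha>+\<beta>)/2 - \<theta>))) \<longlongrightarrow> of_real r * cis \<theta>) (at_right 0)"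
    unfolding cis_conv_exp
    by (rule tendsto_eq_intros refl | simp)+
qed

lemma exp_Complex_polar: "exp (Complex t s) = of_real (exp t) * cis s"
  by (simp add: exp_eq_polar exp_of_real)

lemma main_bound:
  fixes f :: "complex \<Rightarrow> complex" and \<alpha> \<beta> M C lam :: real
  assumes ab: "\<alpha> < \<beta>"
    and hol: "f holomorphic_on sector \<alpha> \<beta>"
    and cont: "continuous_on (closure (sector \<alpha> \<beta>)) f"
    and "M > 0" and "C > 0" and "lam > 0"
    and Mb: "\<And>z. z \<in> sector \<alpha> \<beta> \<Longrightarrow> cmod (f z) \<le> M"
    and Cb: "\<And>r. r > 0 \<Longrightarrow> cmod (f (of_real r * cis \<alpha>)) \<le> C / r powr lam"
    and th: "\<alpha> < \<theta>" "\<theta> < \<beta>" and ep: "\<epsilon> > 0"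
  shows "cmod (f (exp (Complex t0 \<theta>))) \<le>
     exp (ln (max 1 M) + (\<beta> - \<theta>) / (\<beta> - \<alpha>) * (ln C - lam * t0)) * exp (\<epsilon> * (t0\<^sup>2 - \<theta>\<^sup>2 + \<alpha>\<^sup>2 + \<beta>\<^sup>2))"
proof -
  define K where "K = max 1 M"
  define L where "L = ln C"
  define D where "D = \<beta> - \<alpha>"
  have K1: "K \<ge> 1" and KM: "M \<le> K" unfolding K_def by auto
  have D0: "D > 0" using ab unfolding D_def by simp
  define phi where "phi w = of_real (ln K) + (of_real (\<beta>*L) - of_real (\<beta>*lam) * w + \<i> * of_real L * w
      - \<i> * of_real lam * w^2 / 2) / of_real D" for w
  have Rephi: "Re (phi (Complex t s)) = ln K + (\<beta> - s) / D * (L - lam * t)" for t s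
    unfolding phi_def using D0 by (simp add: power2_eq_square field_simps)
  have clos: "\<And>z. \<alpha> \<le> Im z \<Longrightarrow> Im z \<le> \<beta> \<Longrightarrow> exp z \<in> closure (sector \<alpha> \<beta>)"
    using closure_sector_mem[OF ab] by (simp add: exp_eq_polar exp_of_real)
  have inS: "\<And>z. \<alpha> < Im z \<Longrightarrow> Im z < \<beta> \<Longrightarrow> exp z \<in> sector \<alpha> \<beta>"
    using sector_mem by (simp add: exp_eq_polar exp_of_real)
  have fK: "cmod (f (exp z)) \<le> K" if "\<alpha> \<le> Im z" "Im z \<le> \<beta>" for z
    using continuous_on_closure_norm_le[OF cont, of M "exp z"] Mb clos[OF that] KM by force
  define T where "T = \<bar>t0\<bar> + 1 + (\<bar>L\<bar> + lam) / \<epsilon>"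
  have T1: "T \<ge> 1" and T0: "\<bar>t0\<bar> < T" unfolding T_def using ep \<open>lam > 0\<close>
    by (auto simp: add_pos_nonneg divide_nonneg_pos add_nonneg_nonneg)
  have eT: "\<epsilon> * T \<ge> \<bar>L\<bar> + lam"
  proof -
    have "\<epsilon> * T = \<epsilon> * (\<bar>t0\<bar> + 1) + (\<bar>L\<bar> + lam)" unfolding T_def using ep by (simp add: field_simps)
    moreover have "\<epsilon> * (\<bar>t0\<bar> + 1) \<ge> 0" using ep by simp
    ultimately show ?thesis by linarith
  qed
  have eT2: "\<epsilon> * T\<^sup>2 \<ge> \<bar>L\<bar> + lam * T"
  proof -
    have "\<epsilon> * T\<^sup>2 = (\<epsilon> * T) * T" by (simp add: power2_eq_square)
    also have "\<dots> \<ge> (\<bar>L\<bar> + lam) * T" using eT T1 by (intro mult_right_mono) auto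
    moreover have "\<bar>L\<bar> * 1 \<le> \<bar>L\<bar> * T" using T1 by (intro mult_left_mono) auto
    ultimately show ?thesis by (simp add: distrib_right power2_eq_square mult.assoc)
  qed
  define R where "R = {w. - T < Re w \<and> Re w < T \<and> \<alpha> < Im w \<and> Im w < \<beta>}"
  define Rc where "Rc = {w. - T \<le> Re w \<and> Re w \<le> T \<and> \<alpha> \<le> Im w \<and> Im w \<le> \<beta>}"
  have openR: "open R" unfolding R_def
    by (intro open_Collect_conj open_Collect_less continuous_intros)
  have closedRc: "closed Rc" unfolding Rc_def
    by (intro closed_Collect_conj closed_Collect_le continuous_intros)
  have clR: "closure R \<subseteq> Rc" by (rule closure_minimal[OF _ closedRc]) (auto simp: R_def Rc_def)
  have bR: "bounded R"
  proof -
    have "R \<subseteq> cball 0 (T + \<bar>\<alpha>\<bar> + \<bar>\<beta>\<bar>)"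
    proof
      fix w assume "w \<in> R"
      then have "cmod w \<le> \<bar>Re w\<bar> + \<bar>Im w\<bar>" "\<bar>Re w\<bar> \<le> T" "\<bar>Im w\<bar> \<le> \<bar>\<alpha>\<bar> + \<bar>\<beta>\<bar>"
        using cmod_le[of w] unfolding R_def by auto
      then show "w \<in> cball 0 (T + \<bar>\<alpha>\<bar> + \<bar>\<beta>\<bar>)" by simp
    qed
    then show ?thesis using bounded_cball bounded_subset by blast
  qed
  define H where "H w = f (exp w) * exp (- phi w) * exp (- of_real \<epsilon> * w^2)" for w
  have normH: "cmod (H w) = cmod (f (exp w)) * exp (- Re (phi w) - \<epsilon> * ((Re w)\<^sup>2 - (Im w)\<^sup>2))" for w
  proof -
    have "cmod (H w) = cmod (f (exp w)) * exp (Re (- phi w)) * exp (Re (- of_real \<epsilon> * w^2))"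
      unfolding H_def norm_mult norm_exp_eq_Re ..
    also have "Re (- of_real \<epsilon> * w^2) = - \<epsilon> * ((Re w)\<^sup>2 - (Im w)\<^sup>2)"
      by (simp add: power2_eq_square)
    finally show ?thesis by (simp add: mult.assoc exp_add[symmetric])
  qed
  have holE: "(\<lambda>w. exp (- phi w) * exp (- of_real \<epsilon> * w^2)) holomorphic_on UNIV"
    unfolding phi_def using D0 by (intro holomorphic_intros) auto
  have holH: "H holomorphic_on interior R"
  proof -
    have "exp ` R \<subseteq> sector \<alpha> \<beta>" using inS unfolding R_def by auto
    then have fe: "(f \<circ> exp) holomorphic_on R"
      by (intro holomorphic_on_compose_gen[OF _ hol] holomorphic_on_exp)
    have "(\<lambda>w. f (exp w) * (exp (- phi w) * exp (- of_real \<epsilon> * w^2))) holomorphic_on R"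
      using holomorphic_on_mult[OF fe holomorphic_on_subset[OF holE, of R]] by (simp add: o_def)
    then show ?thesis unfolding interior_open[OF openR] H_def by (simp add: mult.assoc)
  qed
  have contH: "continuous_on (closure R) H"
  proof -
    have "exp ` Rc \<subseteq> closure (sector \<alpha> \<beta>)" using clos unfolding Rc_def by auto
    then have "continuous_on Rc (\<lambda>w. f (exp w))"
      by (intro continuous_on_compose2[OF cont] continuous_on_exp continuous_on_id)
    moreover have "continuous_on Rc (\<lambda>w. exp (- phi w) * exp (- of_real \<epsilon> * w^2))"
      using holomorphic_on_imp_continuous_on[OF holE] continuous_on_subset by blast
    ultimately have "continuous_on Rc (\<lambda>w. f (exp w) * (exp (- phi w) * exp (- of_real \<epsilon> * w^2)))"
      by (rule continuous_on_mult)
    then have "continuous_on Rc H" unfolding H_def by (simp add: mult.assoc)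
    then show ?thesis using clR continuous_on_subset by blast
  qed
  define B where "B = exp (\<epsilon> * (\<alpha>\<^sup>2 + \<beta>\<^sup>2))"
  have sq: "s\<^sup>2 \<le> \<alpha>\<^sup>2 + \<beta>\<^sup>2" if "\<alpha> \<le> s" "s \<le> \<beta>" for s
  proof -
    have "\<bar>s\<bar> \<le> \<bar>\<alpha>\<bar> \<or> \<bar>s\<bar> \<le> \<bar>\<beta>\<bar>" using that by linarith
    then have "s\<^sup>2 \<le> \<alpha>\<^sup>2 \<or> s\<^sup>2 \<le> \<beta>\<^sup>2" by (simp add: abs_le_square_iff)
    then show ?thesis using zero_le_power2[of \<alpha>] zero_le_power2[of \<beta>] by linarith
  qed
  have front: "cmod (H z) \<le> B" if z: "z \<in> frontier R" for z
  proof -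
    obtain t s where zts: "z = Complex t s" by (cases z)
    from z have zRc: "z \<in> Rc" and znR: "z \<notin> R"
      using clR unfolding frontier_def interior_open[OF openR] by auto
    then have tT: "-T \<le> t" "t \<le> T" and sab: "\<alpha> \<le> s" "s \<le> \<beta>" unfolding Rc_def zts by auto
    have q0: "0 \<le> (\<beta> - s) / D" "(\<beta> - s) / D \<le> 1" using sab D0 unfolding D_def by auto
    have es: "\<epsilon> * s\<^sup>2 \<le> \<epsilon> * (\<alpha>\<^sup>2 + \<beta>\<^sup>2)" using sq[OF sab] ep by (simp add: mult_left_mono)
    have nH: "cmod (H z) = cmod (f (exp z)) * exp (- Re (phi z) - \<epsilon> * (t\<^sup>2 - s\<^sup>2))"
      using normH[of z] zts by simp
    have fz: "cmod (f (exp z)) \<le> K" using fK sab zts by simp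
    consider "s = \<alpha>" | "s = \<beta>" | "t = T \<or> t = -T" using znR zts tT sab unfolding R_def by force
    then show ?thesis
    proof cases
      case 1
      have "cmod (f (exp z)) \<le> C / exp t powr lam"
        using Cb[of "exp t"] 1 zts by (simp add: exp_Complex_polar)
      also have "\<dots> = exp (L - lam * t)" using \<open>C>0\<close> unfolding L_def
        by (simp add: powr_def exp_diff)
      finally have f1: "cmod (f (exp z)) \<le> exp (L - lam * t)" .
      have "cmod (H z) \<le> exp (L - lam * t) * exp (- Re (phi z) - \<epsilon> * (t\<^sup>2 - s\<^sup>2))"
        unfolding nH by (rule mult_right_mono[OF f1]) simp
      also have "\<dots> = exp (- ln K - \<epsilon> * t\<^sup>2 + \<epsilon> * s\<^sup>2)"
        unfolding exp_add[symmetric] zts Rephi 1 using D0 unfolding D_def by (simp add: algebra_simps)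
      also have "\<dots> \<le> B"
      proof -
        have "ln K \<ge> 0" using K1 by simp
        moreover have "\<epsilon> * t\<^sup>2 \<ge> 0" using ep by simp
        ultimately show ?thesis unfolding B_def using es by simp
      qed
      finally show ?thesis .
    next
      case 2
      have "cmod (H z) \<le> exp (ln K) * exp (- Re (phi z) - \<epsilon> * (t\<^sup>2 - s\<^sup>2))"
        unfolding nH using fz K1 by (intro mult_right_mono) auto
      also have "\<dots> = exp (- \<epsilon> * t\<^sup>2 + \<epsilon> * s\<^sup>2)"
        unfolding exp_add[symmetric] zts Rephi 2 by (simp add: algebra_simps)
      also have "\<dots> \<le> B"
      proof -
        have "\<epsilon> * t\<^sup>2 \<ge> 0" using ep by simp
        then show ?thesis unfolding B_def using es by simp
      qed
      finally show ?thesis .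
    next
      case 3
      have tabs: "\<bar>t\<bar> = T" using 3 T1 by auto
      have lt: "\<bar>L - lam * t\<bar> \<le> \<bar>L\<bar> + lam * T"
        using abs_triangle_ineq4[of L "lam * t"] tabs \<open>lam > 0\<close> by (simp add: abs_mult)
      have "- ((\<beta> - s) / D * (L - lam * t)) \<le> \<bar>(\<beta> - s) / D * (L - lam * t)\<bar>" by (rule abs_ge_minus_self)
      also have "\<dots> \<le> 1 * \<bar>L - lam * t\<bar>" unfolding abs_mult using q0
        by (intro mult_right_mono) auto
      finally have key: "- ((\<beta> - s) / D * (L - lam * t)) \<le> \<epsilon> * t\<^sup>2"
        using lt eT2 tabs by (simp add: power2_abs[symmetric, of t])
      have "cmod (H z) \<le> exp (ln K) * exp (- Re (phi z) - \<epsilon> * (t\<^sup>2 - s\<^sup>2))"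
        unfolding nH using fz K1 by (intro mult_right_mono) auto
      also have "\<dots> = exp (- ((\<beta> - s) / D * (L - lam * t)) - \<epsilon> * t\<^sup>2 + \<epsilon> * s\<^sup>2)"
        unfolding exp_add[symmetric] zts Rephi by (simp add: algebra_simps)
      also have "\<dots> \<le> B" unfolding B_def using key es by simp
      finally show ?thesis .
    qed
  qed
  have w0R: "Complex t0 \<theta> \<in> R" unfolding R_def using T0 th by auto
  have "cmod (H (Complex t0 \<theta>)) \<le> B"
    by (rule maximum_modulus_frontier[OF holH contH bR front w0R])
  then have "cmod (f (exp (Complex t0 \<theta>))) * exp (- Re (phi (Complex t0 \<theta>)) - \<epsilon> * (t0\<^sup>2 - \<theta>\<^sup>2)) \<le> B"
    using normH[of "Complex t0 \<theta>"] by simp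
  then have "cmod (f (exp (Complex t0 \<theta>))) \<le> B / exp (- Re (phi (Complex t0 \<theta>)) - \<epsilon> * (t0\<^sup>2 - \<theta>\<^sup>2))"
    by (simp add: field_simps)
  also have "\<dots> = exp (Re (phi (Complex t0 \<theta>))) * exp (\<epsilon> * (t0\<^sup>2 - \<theta>\<^sup>2 + \<alpha>\<^sup>2 + \<beta>\<^sup>2))"
    unfolding B_def by (simp add: exp_diff[symmetric] exp_add[symmetric] algebra_simps)
  finally show ?thesis unfolding Rephi K_def L_def D_def .
qed

theorem lemma5p1:
  fixes f :: "complex \<Rightarrow> complex" and \<alpha> \<beta> M C lam :: real
  assumes "\<alpha> < \<beta>"
    and "f holomorphic_on sector \<alpha> \<beta>"
    and "continuous_on (closure (sector \<alpha> \<beta>)) f"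
    and "M > 0" and "C > 0" and "lam > 0"
    and "\<And>z. z \<in> sector \<alpha> \<beta> \<Longrightarrow> cmod (f z) \<le> M"
    and "\<And>r. r > 0 \<Longrightarrow> cmod (f (of_real r * cis \<alpha>)) \<le> C / r powr lam"
  shows "\<And>r \<theta>. r > 0 \<Longrightarrow> \<alpha> \<le> \<theta> \<Longrightarrow> \<theta> \<le> \<beta> \<Longrightarrow>
           cmod (f (of_real r * cis \<theta>)) \<le> max 1 M * (C / r powr lam) powr ((\<beta> - \<theta>) / (\<beta> - \<alpha>))"
proof -
  fix r \<theta> :: real
  assume r: "r > 0" and t1: "\<alpha> \<le> \<theta>" and t2: "\<theta> \<le> \<beta>"
  define K where "K = max 1 M"
  define p where "p = (\<beta> - \<theta>) / (\<beta> - \<alpha>)"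
  have K1: "K \<ge> 1" and KM: "M \<le> K" unfolding K_def by auto
  have Q0: "C / r powr lam > 0" using r \<open>C > 0\<close> by simp
  have lnQ: "ln (C / r powr lam) = ln C - lam * ln r"
    using r \<open>C > 0\<close> by (simp add: ln_div ln_powr)
  consider "\<theta> = \<alpha>" | "\<theta> = \<beta>" | "\<alpha> < \<theta> \<and> \<theta> < \<beta>" using t1 t2 by linarith
  then show "cmod (f (of_real r * cis \<theta>)) \<le> max 1 M * (C / r powr lam) powr ((\<beta> - \<theta>) / (\<beta> - \<alpha>))"
  proof cases
    case 1
    then have "(C / r powr lam) powr ((\<beta> - \<theta>) / (\<beta> - \<alpha>)) = C / r powr lam"
      using \<open>\<alpha> < \<beta>\<close> Q0 \<open>C > 0\<close> by simp
    moreover have "C / r powr lam \<le> max 1 M * (C / r powr lam)"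
      using mult_right_mono[OF K1, of "C / r powr lam"] Q0 unfolding K_def by simp
    ultimately show ?thesis using assms(8)[OF r] 1 by simp
  next
    case 2
    have "cmod (f (of_real r * cis \<theta>)) \<le> M"
      using continuous_on_closure_norm_le[OF assms(3), of M "of_real r * cis \<theta>"] assms(7)
        closure_sector_mem[OF \<open>\<alpha> < \<beta>\<close> t1 t2 r] by force
    then show ?thesis using 2 Q0 r \<open>C > 0\<close> by simp
  next
    case 3
    have e: "of_real r * cis \<theta> = exp (Complex (ln r) \<theta>)" using r by (simp add: exp_Complex_polar)
    define A where "A = exp (ln K + p * (ln C - lam * ln r))"
    define c where "c = (ln r)\<^sup>2 - \<theta>\<^sup>2 + \<alpha>\<^sup>2 + \<beta>\<^sup>2"
    have bd: "cmod (f (of_real r * cis \<theta>)) \<le> A * exp (\<epsilon> * c)" if "\<epsilon> > 0" for \<epsilon>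
      unfolding e A_def c_def p_def K_def
      using main_bound[OF assms(1-8), of \<theta> \<epsilon> "ln r"] 3 that by simp
    have "((\<lambda>\<epsilon>. A * exp (\<epsilon> * c)) \<longlongrightarrow> A * exp (0 * c)) (at_right 0)"
      by (intro tendsto_intros)
    then have lim: "((\<lambda>\<epsilon>. A * exp (\<epsilon> * c)) \<longlongrightarrow> A) (at_right 0)" by simp
    have "cmod (f (of_real r * cis \<theta>)) \<le> A"
      by (rule tendsto_lowerbound[OF lim]) (auto simp: eventually_at_right_less bd intro: eventually_mono[OF eventually_at_right_less] )
    also have "A = K * (C / r powr lam) powr p"
    proof -
      have "(C / r powr lam) powr p = exp (p * (ln C - lam * ln r))"
        unfolding powr_def[of "C / r powr lam"] lnQ[symmetric] using Q0 r \<open>C > 0\<close> by (simp add: mult.commute)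
      then show ?thesis unfolding A_def using K1 by (simp add: exp_add)
    qed
    finally show ?thesis unfolding K_def p_def .
  qed
qed

end
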